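(* Let $(\Omega,\mathcal{F})$ be a measurable space, $\mathrm{B}_b$ the space of bounded real-valued measurable functions, $C\subset\mathrm{B}_b$ a linear subspace containing the constants, and $H\colon C\to\mathbb{R}$ a convex premium principle. Let $R_{\mathrm{Max}}(X):=\inf\{H(X_0)\mid X_0\in C,\ X_0\ge X\}$ for $X\in\mathrm{B}_b$ and $D_{\mathrm{Min}}(X):=H(X)-R_{\mathrm{Max}}(X)$ for $X\in C$. Let $\mathcal{P}:=\{\mathbb{P}\in\mathrm{ba}_+^1\mid H^*(\mathbb{P})<\infty\}$ and, for $\mathbb{P}\in\mathcal{P}$, $D_{\mathbb{P}}(X):=H(X-\mathbb{E}_{\mathbb{P}}(X))$ for $X\in C$. Then $$D_{\mathrm{Min}}(X)=\min_{\mathbb{P}\in\mathcal{P}}\big(D_{\mathbb{P}}(X)+H^*(\mathbb{P})\big)\quad\text{for all }X\in C.$$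
   Context: A premium principle is a map $H\colon C\to\mathbb{R}$ with $H(X+m)=H(X)+m$ for $X\in C$, $m\in\mathbb{R}$, $H(0)=0$, and $H(X)\ge0$ for $X\in C$ with $X\ge0$ (pointwise order). Convex means $H(\lambda X+(1-\lambda)Y)\le\lambda H(X)+(1-\lambda)H(Y)$ for $\lambda\in[0,1]$. $\mathrm{ba}_+^1$ is the set of finitely additive probability measures on $(\Omega,\mathcal{F})$, $\mathbb{E}_{\mathbb{P}}$ the associated integral, and $H^*(\mathbb{P}):=\sup_{X\in C}(\mathbb{E}_{\mathbb{P}}(X)-H(X))\in[0,\infty]$. *)

theory Defs
  imports "HOL-Analysis.Analysis"
begin

definition Bb :: "'a measure \<Rightarrow> ('a \<Rightarrow> real) set" where
  "Bb M = {X. X \<in> borel_measurable M \<and> bounded (range X)}"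

definition lin_sub_const :: "('a \<Rightarrow> real) set \<Rightarrow> bool" where
  "lin_sub_const C \<longleftrightarrow>
     (\<forall>X\<in>C. \<forall>Y\<in>C. (\<lambda>w. X w + Y w) \<in> C) \<and>
     (\<forall>X\<in>C. \<forall>c::real. (\<lambda>w. c * X w) \<in> C) \<and>
     (\<forall>c::real. (\<lambda>_. c) \<in> C)"

definition premium_principle :: "('a \<Rightarrow> real) set \<Rightarrow> (('a \<Rightarrow> real) \<Rightarrow> real) \<Rightarrow> bool" where
  "premium_principle C H \<longleftrightarrow>
     (\<forall>X\<in>C. \<forall>m::real. H (\<lambda>w. X w + m) = H X + m) \<and>
     H (\<lambda>_. 0) = 0 \<and>
     (\<forall>X\<in>C. (\<forall>w. X w \<ge> 0) \<longrightarrow> H X \<ge> 0)"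

definition convex_on_fun :: "('a \<Rightarrow> real) set \<Rightarrow> (('a \<Rightarrow> real) \<Rightarrow> real) \<Rightarrow> bool" where
  "convex_on_fun C H \<longleftrightarrow>
     (\<forall>X\<in>C. \<forall>Y\<in>C. \<forall>l::real. 0 \<le> l \<and> l \<le> 1 \<longrightarrow>
        H (\<lambda>w. l * X w + (1 - l) * Y w) \<le> l * H X + (1 - l) * H Y)"

text \<open>Finitely additive probability measures (ba_+^1) on M, as set functions on sets M
  (normalised to 0 outside sets M).\<close>
definition ba1 :: "'a measure \<Rightarrow> ('a set \<Rightarrow> real) set" where
  "ba1 M = {P. (\<forall>A\<in>sets M. P A \<ge> 0) \<and> P (space M) = 1 \<and>
       (\<forall>A\<in>sets M. \<forall>B\<in>sets M. A \<inter> B = {} \<longrightarrow> P (A \<union> B) = P A + P B) \<and>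
       (\<forall>A. A \<notin> sets M \<longrightarrow> P A = 0)}"

definition meas_partitions :: "'a measure \<Rightarrow> 'a set set set" where
  "meas_partitions M = {\<A>. finite \<A> \<and> \<A> \<subseteq> sets M \<and> {} \<notin> \<A> \<and>
       \<Union>\<A> = space M \<and> (\<forall>A\<in>\<A>. \<forall>B\<in>\<A>. A \<noteq> B \<longrightarrow> A \<inter> B = {})}"

text \<open>Integral of a bounded measurable function w.r.t. a finitely additive measure:
  supremum of the integrals of measurable simple functions below X (lower sums over
  finite measurable partitions).\<close>
definition ba_integral :: "'a measure \<Rightarrow> ('a set \<Rightarrow> real) \<Rightarrow> ('a \<Rightarrow> real) \<Rightarrow> real" where
  "ba_integral M P X = (SUP \<A>\<in>meas_partitions M. \<Sum>A\<in>\<A>. P A * (INF w\<in>A. X w))"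

definition Hstar :: "'a measure \<Rightarrow> ('a \<Rightarrow> real) set \<Rightarrow> (('a \<Rightarrow> real) \<Rightarrow> real)
    \<Rightarrow> ('a set \<Rightarrow> real) \<Rightarrow> ereal" where
  "Hstar M C H P = (SUP X\<in>C. ereal (ba_integral M P X - H X))"

definition RMax :: "('a \<Rightarrow> real) set \<Rightarrow> (('a \<Rightarrow> real) \<Rightarrow> real) \<Rightarrow> ('a \<Rightarrow> real) \<Rightarrow> ereal" where
  "RMax C H X = (INF X0\<in>{X0\<in>C. \<forall>w. X0 w \<ge> X w}. ereal (H X0))"

definition DMin :: "('a \<Rightarrow> real) set \<Rightarrow> (('a \<Rightarrow> real) \<Rightarrow> real) \<Rightarrow> ('a \<Rightarrow> real) \<Rightarrow> ereal" where
  "DMin C H X = ereal (H X) - RMax C H X"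

definition Pset :: "'a measure \<Rightarrow> ('a \<Rightarrow> real) set \<Rightarrow> (('a \<Rightarrow> real) \<Rightarrow> real) \<Rightarrow> ('a set \<Rightarrow> real) set" where
  "Pset M C H = {P\<in>ba1 M. Hstar M C H P < \<infinity>}"

definition DP :: "'a measure \<Rightarrow> (('a \<Rightarrow> real) \<Rightarrow> real) \<Rightarrow> ('a set \<Rightarrow> real) \<Rightarrow> ('a \<Rightarrow> real) \<Rightarrow> real" where
  "DP M H P X = H (\<lambda>w. X w - ba_integral M P X)"

end

theory Submission
  imports Defs
begin

definition lgraph :: "('a\<Rightarrow>real) set \<Rightarrow> (('a\<Rightarrow>real)\<Rightarrow>real) \<Rightarrow> (('a\<Rightarrow>real)\<times>real) set \<Rightarrow> bool" where
 "lgraph V g G \<longleftrightarrow> G \<subseteq> V \<times> UNIV \<and> ((\<lambda>_. 0), 0) \<in> G \<and>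
   (\<forall>x r y s. (x,r)\<in>G \<longrightarrow> (y,s)\<in>G \<longrightarrow> ((\<lambda>w. x w + y w), r+s) \<in> G) \<and>
   (\<forall>x r c. (x,r)\<in>G \<longrightarrow> ((\<lambda>w. c * x w), c*r) \<in> G) \<and>
   (\<forall>x r s. (x,r)\<in>G \<longrightarrow> (x,s)\<in>G \<longrightarrow> r = s) \<and> (\<forall>x r. (x,r)\<in>G \<longrightarrow> r \<le> g x)"

lemma lgraphD:
  assumes "lgraph V g G"
  shows "G \<subseteq> V \<times> UNIV" "((\<lambda>_. 0), 0) \<in> G"
    "\<And>x r y s. (x,r)\<in>G \<Longrightarrow> (y,s)\<in>G \<Longrightarrow> ((\<lambda>w. x w + y w), r+s) \<in> G"
    "\<And>x r c. (x,r)\<in>G \<Longrightarrow> ((\<lambda>w. c * x w), c*r) \<in> G"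
    "\<And>x r s. (x,r)\<in>G \<Longrightarrow> (x,s)\<in>G \<Longrightarrow> r = s"
    "\<And>x r. (x,r)\<in>G \<Longrightarrow> r \<le> g x"
  using assms unfolding lgraph_def by blast+

lemma lgraph_chain:
  assumes "Ch \<in> chains {G. lgraph V g G}" "Ch \<noteq> {}"
  shows "lgraph V g (\<Union>Ch)"
proof -
  have sub: "Ch \<subseteq> {G. lgraph V g G}" and ch: "chain\<^sub>\<subseteq> Ch" using assms(1) by (auto simp: chains_def)
  have two: "\<exists>G\<in>Ch. a \<in> G \<and> b \<in> G" if A: "a \<in> \<Union>Ch" "b \<in> \<Union>Ch" for a b
  proof -
    obtain G1 G2 where "G1 \<in> Ch" "G2 \<in> Ch" "a \<in> G1" "b \<in> G2" using A by blast
    then show ?thesis using ch unfolding chain_subset_def by blast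
  qed
  show ?thesis unfolding lgraph_def
  proof (intro conjI allI impI)
    show "\<Union>Ch \<subseteq> V \<times> UNIV" using sub by (auto simp: lgraph_def)
    show "((\<lambda>_. 0), 0) \<in> \<Union>Ch" using sub assms(2) by (auto simp: lgraph_def)
    fix x r y s assume "(x,r) \<in> \<Union>Ch" "(y,s) \<in> \<Union>Ch"
    then obtain G where "G\<in>Ch" "(x,r)\<in>G" "(y,s)\<in>G" using two by blast
    moreover have "lgraph V g G" using sub \<open>G\<in>Ch\<close> by blast
    ultimately have "((\<lambda>w. x w + y w), r+s) \<in> G" using lgraphD(3) by blast
    then show "((\<lambda>w. x w + y w), r+s) \<in> \<Union>Ch" using \<open>G\<in>Ch\<close> by blast
  next
    fix x r c assume "(x,r) \<in> \<Union>Ch"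
    then obtain G where "G\<in>Ch" "(x,r)\<in>G" by blast
    moreover have "lgraph V g G" using sub \<open>G\<in>Ch\<close> by blast
    ultimately have "((\<lambda>w. c * x w), c*r) \<in> G" using lgraphD(4) by blast
    then show "((\<lambda>w. c * x w), c*r) \<in> \<Union>Ch" using \<open>G\<in>Ch\<close> by blast
  next
    fix x r s assume "(x,r) \<in> \<Union>Ch" "(x,s) \<in> \<Union>Ch"
    then obtain G where "G\<in>Ch" "(x,r)\<in>G" "(x,s)\<in>G" using two by blast
    moreover have "lgraph V g G" using sub \<open>G\<in>Ch\<close> by blast
    ultimately show "r = s" using lgraphD(5) by blast
  next
    fix x r assume "(x,r) \<in> \<Union>Ch"
    then obtain G where "G\<in>Ch" "(x,r)\<in>G" by blast
    moreover have "lgraph V g G" using sub \<open>G\<in>Ch\<close> by blast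
    ultimately show "r \<le> g x" using lgraphD(6) by blast
  qed
qed

lemma lgraph_extend:
  assumes V0: "(\<lambda>_. 0) \<in> V"
    and Vadd: "\<forall>x\<in>V. \<forall>y\<in>V. (\<lambda>w. x w + y w) \<in> V"
    and Vsc: "\<forall>x\<in>V. \<forall>c. (\<lambda>w. c * x w) \<in> V"
    and cvx: "\<forall>u\<in>V. \<forall>v\<in>V. \<forall>a::real. 0 \<le> a \<and> a \<le> 1 \<longrightarrow> g (\<lambda>z. a * u z + (1-a) * v z) \<le> a * g u + (1-a) * g v"
    and G: "lgraph V g G" and y: "y \<in> V" "\<forall>r. (y,r) \<notin> G"
  shows "\<exists>G'. lgraph V g G' \<and> G \<subseteq> G' \<and> G' \<noteq> G"
proof -
  have GV: "x \<in> V" if "(x,r)\<in>G" for x r using lgraphD(1)[OF G] that by blast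
  have Gadd: "((\<lambda>w. x w + y w), r+s) \<in> G" if "(x,r)\<in>G" "(y,s)\<in>G" for x r y s
    using lgraphD(3)[OF G] that .
  have Gsc: "((\<lambda>w. c * x w), c*r) \<in> G" if "(x,r)\<in>G" for x r c
    using lgraphD(4)[OF G] that .
  have Gfun: "r = s" if "(x,r)\<in>G" "(x,s)\<in>G" for x r s
    using lgraphD(5)[OF G] that .
  have Gdom: "r \<le> g x" if "(x,r)\<in>G" for x r
    using lgraphD(6)[OF G] that .
  have G0: "((\<lambda>_. 0), 0) \<in> G" using lgraphD(2)[OF G] .
  have Vsc': "(\<lambda>w. c * x w) \<in> V" if "x \<in> V" for x c using Vsc that by blast
  have Vadd': "(\<lambda>w. x w + z w) \<in> V" if "x \<in> V" "z \<in> V" for x z using Vadd that by blast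
  have Vlin: "(\<lambda>w. x w + c * z w) \<in> V" if "x \<in> V" "z \<in> V" for x z c
    using Vadd'[OF that(1) Vsc'[OF that(2)]] by simp
  define S where "S = {(r' - g (\<lambda>z. w' z - s * y z)) / s | w' r' s. (w',r')\<in>G \<and> s > 0}"
  have key: "(r' - g (\<lambda>z. w' z - s * y z)) / s \<le> (g (\<lambda>z. w z + t * y z) - r) / t"
    if "(w',r')\<in>G" "s > 0" "(w,r)\<in>G" "t > 0" for w' r' s w r t
  proof -
    define a where "a = t / (s + t)"
    have a01: "0 \<le> a" "a \<le> 1" using that by (auto simp: a_def)
    have "((\<lambda>z. a * w' z + (1-a) * w z), a * r' + (1-a) * r) \<in> G"
      using Gadd[OF Gsc[OF that(1)] Gsc[OF that(3)]] by simp
    then have "a * r' + (1-a) * r \<le> g (\<lambda>z. a * w' z + (1-a) * w z)" by (rule Gdom)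
    also have "(\<lambda>z. a * w' z + (1-a) * w z) = (\<lambda>z. a * (w' z - s * y z) + (1-a) * (w z + t * y z))"
      using that by (auto simp: a_def field_simps)
    also have "g \<dots> \<le> a * g (\<lambda>z. w' z - s * y z) + (1-a) * g (\<lambda>z. w z + t * y z)"
      using cvx a01 Vlin[OF GV[OF that(1)] y(1), of "-s"] Vlin[OF GV[OF that(3)] y(1), of t] by auto
    finally have "a * r' + (1-a) * r \<le> a * g (\<lambda>z. w' z - s * y z) + (1-a) * g (\<lambda>z. w z + t * y z)" .
    then have "(s+t) * (a * r' + (1-a) * r) \<le> (s+t) * (a * g (\<lambda>z. w' z - s * y z) + (1-a) * g (\<lambda>z. w z + t * y z))"
      using that by (intro mult_left_mono) auto
    moreover have e1: "(s+t) * a = t" "(s+t) * (1-a) = s" using that by (auto simp: a_def field_simps)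
    have dd: "(s+t) * (a * p + (1-a) * q) = ((s+t) * a) * p + ((s+t) * (1-a)) * q" for p q
      by (simp add: algebra_simps)
    moreover have "(s+t) * (a * r' + (1-a) * r) = t * r' + s * r"
      unfolding dd e1 ..
    moreover have "(s+t) * (a * g (\<lambda>z. w' z - s * y z) + (1-a) * g (\<lambda>z. w z + t * y z))
       = t * g (\<lambda>z. w' z - s * y z) + s * g (\<lambda>z. w z + t * y z)"
      unfolding dd e1 ..
    ultimately have "t * r' + s * r \<le> t * g (\<lambda>z. w' z - s * y z) + s * g (\<lambda>z. w z + t * y z)"
      by simp
    then show ?thesis using that by (simp add: field_simps)
  qed
  have memS: "(r' - g (\<lambda>z. w' z - s * y z)) / s \<in> S" if "(w',r')\<in>G" "s > 0" for w' r' s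
    unfolding S_def using that by blast
  have Sne: "S \<noteq> {}" using memS[OF G0, of 1] by auto
  have Sbdd: "bdd_above S" unfolding bdd_above_def
  proof (intro exI ballI)
    fix u assume "u \<in> S"
    then obtain w' r' s where "u = (r' - g (\<lambda>z. w' z - s * y z)) / s" "(w',r')\<in>G" "s > 0"
      unfolding S_def by blast
    then show "u \<le> (g (\<lambda>z. (\<lambda>_. 0) z + 1 * y z) - 0) / 1" using key[OF _ _ G0, of w' r' s 1] by simp
  qed
  define c where "c = Sup S"
  have lowc: "(r' - g (\<lambda>z. w' z - s * y z)) / s \<le> c" if "(w',r')\<in>G" "s > 0" for w' r' s
    unfolding c_def by (rule cSup_upper[OF memS[OF that] Sbdd])
  have upc: "c \<le> (g (\<lambda>z. w z + t * y z) - r) / t" if "(w,r)\<in>G" "t > 0" for w r t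
    unfolding c_def
  proof (rule cSup_least[OF Sne])
    fix u assume "u \<in> S"
    then obtain w' r' s where "u = (r' - g (\<lambda>z. w' z - s * y z)) / s" "(w',r')\<in>G" "s > 0"
      unfolding S_def by blast
    then show "u \<le> (g (\<lambda>z. w z + t * y z) - r) / t" using key[OF _ _ that] by simp
  qed
  define G' where "G' = {((\<lambda>z. w z + t * y z), r + t * c) | w r t. (w,r)\<in>G}"
  have memG': "((\<lambda>z. w z + t * y z), r + t * c) \<in> G'" if "(w,r)\<in>G" for w r t
    unfolding G'_def using that by blast
  have memG'2: "(x, q) \<in> G'" if "(w,r)\<in>G" "x = (\<lambda>z. w z + t * y z)" "q = r + t * c" for x q w r t
    using memG'[OF that(1), of t] that(2,3) by simp
  have G'E: "\<exists>w r t. (w,r)\<in>G \<and> x = (\<lambda>z. w z + t * y z) \<and> q = r + t * c" if "(x,q) \<in> G'" for x q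
    using that unfolding G'_def by blast
  have "lgraph V g G'" unfolding lgraph_def
  proof (intro conjI allI impI)
    show "G' \<subseteq> V \<times> UNIV"
    proof
      fix p assume "p \<in> G'"
      then obtain x q where p: "p = (x,q)" "(x,q) \<in> G'" by (cases p) auto
      then obtain w r t where "(w,r)\<in>G" "x = (\<lambda>z. w z + t * y z)" using G'E by blast
      then show "p \<in> V \<times> UNIV" using p Vlin GV y by auto
    qed
    show "((\<lambda>_. 0), 0) \<in> G'" by (rule memG'2[OF G0, where t=0]) auto
  next
    fix x r x2 s assume a1: "(x,r) \<in> G'" and a2: "(x2,s) \<in> G'"
    obtain w1 r1 t1 where h1: "(w1,r1)\<in>G" "x = (\<lambda>z. w1 z + t1 * y z)" "r = r1 + t1 * c"
      using G'E[OF a1] by blast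
    obtain w2 r2 t2 where h2: "(w2,r2)\<in>G" "x2 = (\<lambda>z. w2 z + t2 * y z)" "s = r2 + t2 * c"
      using G'E[OF a2] by blast
    have "((\<lambda>z. w1 z + w2 z), r1+r2) \<in> G" by (rule Gadd[OF h1(1) h2(1)])
    then show "((\<lambda>w. x w + x2 w), r+s) \<in> G'"
      by (rule memG'2[where t="t1+t2"]) (simp_all add: h1 h2 algebra_simps)
  next
    fix x r c' assume "(x,r) \<in> G'"
    then obtain w1 r1 t1 where h1: "(w1,r1)\<in>G" "x = (\<lambda>z. w1 z + t1 * y z)" "r = r1 + t1 * c"
      using G'E by blast
    have "((\<lambda>z. c' * w1 z), c' * r1) \<in> G" by (rule Gsc[OF h1(1)])
    then show "((\<lambda>w. c' * x w), c'*r) \<in> G'"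
      by (rule memG'2[where t="c' * t1"]) (simp_all add: h1 algebra_simps)
  next
    fix x r s assume a1: "(x,r) \<in> G'" and a2: "(x,s) \<in> G'"
    obtain w1 r1 t1 where h1: "(w1,r1)\<in>G" "x = (\<lambda>z. w1 z + t1 * y z)" "r = r1 + t1 * c"
      using G'E[OF a1] by blast
    obtain w2 r2 t2 where h2: "(w2,r2)\<in>G" "x = (\<lambda>z. w2 z + t2 * y z)" "s = r2 + t2 * c"
      using G'E[OF a2] by blast
    note h = h1 h2
    have pw: "w1 z + t1 * y z = w2 z + t2 * y z" for z
    proof -
      have "x z = w1 z + t1 * y z" using h(2) by simp
      moreover have "x z = w2 z + t2 * y z" using h(5) by simp
      ultimately show ?thesis by simp
    qed
    show "r = s"
    proof (cases "t1 = t2")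
      case True
      have "w1 = w2"
      proof
        fix z show "w1 z = w2 z" using pw[of z] True by simp
      qed
      then show ?thesis using h True Gfun by auto
    next
      case False
      have "((\<lambda>z. (1/(t1-t2)) * (w2 z + (-1) * w1 z)), (1/(t1-t2)) * (r2 + (-1) * r1)) \<in> G"
        by (rule Gsc[OF Gadd[OF h(4) Gsc[OF h(1), of "-1"]], of "1/(t1-t2)"])
      moreover have "(\<lambda>z. (1/(t1-t2)) * (w2 z + (-1) * w1 z)) = y"
      proof
        fix z show "(1/(t1-t2)) * (w2 z + (-1) * w1 z) = y z" using pw[of z] False by (simp add: field_simps)
      qed
      ultimately have "(y, (1/(t1-t2)) * (r2 + (-1) * r1)) \<in> G" by simp
      then show ?thesis using y(2) by blast
    qed
  next
    fix x r assume "(x,r) \<in> G'"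
    then obtain w1 r1 t where h: "(w1,r1)\<in>G" "x = (\<lambda>z. w1 z + t * y z)" "r = r1 + t * c"
      using G'E by blast
    show "r \<le> g x"
    proof (cases t "0::real" rule: linorder_cases)
      case less
      have eqx: "(\<lambda>z. w1 z - (-t) * y z) = x" using h(2) by auto
      have nt: "0 < -t" using less by simp
      have "(r1 - g x) / (-t) \<le> c" by (rule lowc[OF h(1) nt, unfolded eqx])
      then have "r1 - g x \<le> c * (-t)" using nt by (simp only: pos_divide_le_eq)
      then show ?thesis using h by (simp add: algebra_simps)
    next
      case equal
      have "x = w1" using h(2) equal by auto
      then show ?thesis using h Gdom equal by simp
    next
      case greater
      have eqx: "(\<lambda>z. w1 z + t * y z) = x" using h(2) by auto
      have "c \<le> (g x - r1) / t" using upc[OF h(1) greater] unfolding eqx .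
      then have "c * t \<le> g x - r1" using greater by (simp add: pos_le_divide_eq)
      then show ?thesis using h by (simp add: algebra_simps)
    qed
  qed
  moreover have "G \<subseteq> G'"
  proof
    fix p assume "p \<in> G"
    then obtain x q where p: "p = (x,q)" "(x,q) \<in> G" by (cases p) auto
    show "p \<in> G'" unfolding p(1) by (rule memG'2[OF p(2), where t=0]) auto
  qed
  moreover have "(y, c) \<in> G'" by (rule memG'2[OF G0, where t=1]) auto
  ultimately show ?thesis using y(2) by blast
qed

lemma hahn_banach_convex:
  assumes V0: "(\<lambda>_. 0) \<in> V"
    and Vadd: "\<forall>x\<in>V. \<forall>y\<in>V. (\<lambda>w. x w + y w) \<in> V"
    and Vsc: "\<forall>x\<in>V. \<forall>c. (\<lambda>w. c * x w) \<in> V"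
    and cvx: "\<forall>u\<in>V. \<forall>v\<in>V. \<forall>a::real. 0 \<le> a \<and> a \<le> 1 \<longrightarrow> g (\<lambda>z. a * u z + (1-a) * v z) \<le> a * g u + (1-a) * g v"
    and g0: "g (\<lambda>_. 0) \<ge> 0"
  shows "\<exists>l. (\<forall>x\<in>V. \<forall>y\<in>V. l (\<lambda>w. x w + y w) = l x + l y) \<and>
             (\<forall>x\<in>V. \<forall>c. l (\<lambda>w. c * x w) = c * l x) \<and> (\<forall>x\<in>V. l x \<le> g x)"
proof -
  have "\<exists>M\<in>{G. lgraph V g G}. \<forall>X\<in>{G. lgraph V g G}. M \<subseteq> X \<longrightarrow> X = M"
  proof (rule Zorn_Lemma2, intro ballI)
    fix Ch assume Ch: "Ch \<in> chains {G. lgraph V g G}"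
    show "\<exists>U\<in>{G. lgraph V g G}. \<forall>X\<in>Ch. X \<subseteq> U"
    proof (cases "Ch = {}")
      case True
      have "lgraph V g {((\<lambda>_. 0), 0)}" unfolding lgraph_def using V0 g0 by auto
      then show ?thesis using True by blast
    next
      case False then show ?thesis using lgraph_chain[OF Ch] by blast
    qed
  qed
  then obtain M where M: "lgraph V g M" and max: "\<And>X. lgraph V g X \<Longrightarrow> M \<subseteq> X \<Longrightarrow> X = M" by blast
  have ex: "\<exists>r. (x,r) \<in> M" if "x \<in> V" for x
    using lgraph_extend[OF V0 Vadd Vsc cvx M that] max by blast
  define l where "l x = (SOME r. (x,r) \<in> M)" for x
  have lM: "(x, l x) \<in> M" if "x \<in> V" for x unfolding l_def using someI_ex[OF ex[OF that]] .
  have MV: "x \<in> V" if "(x,r) \<in> M" for x r using lgraphD(1)[OF M] that by blast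
  have Mfun: "r = s" if "(x,r)\<in>M" "(x,s)\<in>M" for x r s
    using lgraphD(5)[OF M] that .
  have Madd: "((\<lambda>w. x w + y w), r+s) \<in> M" if "(x,r)\<in>M" "(y,s)\<in>M" for x r y s
    using lgraphD(3)[OF M] that .
  have Msc: "((\<lambda>w. c * x w), c*r) \<in> M" if "(x,r)\<in>M" for x r c
    using lgraphD(4)[OF M] that .
  have Mdom: "r \<le> g x" if "(x,r)\<in>M" for x r
    using lgraphD(6)[OF M] that .
  have luniq: "l x = r" if "(x,r) \<in> M" for x r
    using Mfun[OF lM[OF MV[OF that]] that] .
  show ?thesis
  proof (intro exI[of _ l] conjI ballI allI)
    fix x y assume "x \<in> V" "y \<in> V"
    then show "l (\<lambda>w. x w + y w) = l x + l y" using luniq[OF Madd[OF lM lM]] by blast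
  next
    fix x c assume "x \<in> V"
    then show "l (\<lambda>w. c * x w) = c * l x" using luniq[OF Msc[OF lM]] by blast
  next
    fix x assume "x \<in> V"
    then show "l x \<le> g x" using Mdom[OF lM] by blast
  qed
qed

lemma ba1D:
  assumes "P \<in> ba1 M"
  shows "\<And>A. A \<in> sets M \<Longrightarrow> P A \<ge> 0" "P (space M) = 1"
    "\<And>A B. A \<in> sets M \<Longrightarrow> B \<in> sets M \<Longrightarrow> A \<inter> B = {} \<Longrightarrow> P (A \<union> B) = P A + P B"
  using assms unfolding ba1_def by blast+

lemma ba1_fin_add:
  assumes P: "P \<in> ba1 M" and F: "finite F" "F \<subseteq> sets M" "\<forall>A\<in>F. \<forall>B\<in>F. A \<noteq> B \<longrightarrow> A \<inter> B = {}"
  shows "P (\<Union>F) = (\<Sum>A\<in>F. P A)"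
  using F
proof (induction F rule: finite_induct)
  case empty
  have "P ({} \<union> {}) = P {} + P {}" by (rule ba1D(3)[OF P]) auto
  then show ?case by simp
next
  case (insert a F)
  have a: "a \<in> sets M" and Fs: "F \<subseteq> sets M" using insert.prems by auto
  have UF: "\<Union>F \<in> sets M" using sets.finite_Union[OF insert.hyps(1) Fs] .
  have dj: "\<forall>A\<in>insert a F. \<forall>B\<in>insert a F. A \<noteq> B \<longrightarrow> A \<inter> B = {}" using insert.prems(2) .
  have djF: "\<forall>A\<in>F. \<forall>B\<in>F. A \<noteq> B \<longrightarrow> A \<inter> B = {}"
  proof (intro ballI impI)
    fix A B assume "A \<in> F" "B \<in> F" "A \<noteq> B"
    then show "A \<inter> B = {}" using dj by simp
  qed
  have dB: "a \<inter> B = {}" if "B \<in> F" for B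
  proof -
    have "a \<noteq> B" using that insert.hyps(2) by auto
    then show ?thesis using dj that by simp
  qed
  have disj: "a \<inter> \<Union>F = {}" using dB by (simp add: Int_Union)
  have "P (\<Union>(insert a F)) = P (a \<union> \<Union>F)" by simp
  also have "\<dots> = P a + P (\<Union>F)" by (rule ba1D(3)[OF P a UF disj])
  also have "P (\<Union>F) = (\<Sum>A\<in>F. P A)" by (rule insert.IH[OF Fs djF])
  finally show ?case using insert.hyps by simp
qed

lemma bdd_below_absb:
  assumes "\<And>w. \<bar>X w\<bar> \<le> (B::real)" shows "bdd_below (X ` A)"
proof (rule bdd_belowI[of _ "-B"])
  fix x assume "x \<in> X ` A"
  then obtain w where "x = X w" by blast
  then show "-B \<le> x" using assms[of w] unfolding abs_le_iff by linarith
qed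

lemma partition_UNIV:
  assumes "space M = UNIV" shows "{UNIV} \<in> meas_partitions M"
  using assms sets.top[of M] unfolding meas_partitions_def by auto

lemma partition_sum_le:
  assumes P: "P \<in> ba1 M" and sp: "space M = UNIV" and A: "\<A> \<in> meas_partitions M"
    and Y: "\<And>w. \<bar>Y w\<bar> \<le> B"
  shows "(\<Sum>A\<in>\<A>. P A * (INF w\<in>A. Y w)) \<le> B"
proof -
  have fin: "finite \<A>" and sub: "\<A> \<subseteq> sets M" and ne: "{} \<notin> \<A>" and un: "\<Union>\<A> = space M"
    and dj: "\<forall>A\<in>\<A>. \<forall>B\<in>\<A>. A \<noteq> B \<longrightarrow> A \<inter> B = {}"
    using A by (simp_all add: meas_partitions_def)
  have "(\<Sum>A\<in>\<A>. P A * (INF w\<in>A. Y w)) \<le> (\<Sum>A\<in>\<A>. P A * B)"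
  proof (rule sum_mono)
    fix A assume "A \<in> \<A>"
    then have "A \<noteq> {}" "A \<in> sets M" using ne sub by auto
    then obtain w where "w \<in> A" by blast
    have bb: "bdd_below (Y ` A)" using Y by (rule bdd_below_absb)
    have "(INF w\<in>A. Y w) \<le> Y w" by (rule cINF_lower[OF bb \<open>w\<in>A\<close>])
    also have "\<dots> \<le> B" using Y[of w] by simp
    finally show "P A * (INF w\<in>A. Y w) \<le> P A * B"
      using ba1D(1)[OF P \<open>A \<in> sets M\<close>] by (rule mult_left_mono)
  qed
  also have "\<dots> = B * (\<Sum>A\<in>\<A>. P A)" by (simp add: sum_distrib_left mult.commute)
  also have "(\<Sum>A\<in>\<A>. P A) = P (\<Union>\<A>)" using ba1_fin_add[OF P fin sub dj] by simp
  also have "\<dots> = 1" using un ba1D(2)[OF P] by simp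
  finally show ?thesis by simp
qed

lemma ba_integral_mono:
  assumes P: "P \<in> ba1 M" and sp: "space M = UNIV"
    and X: "\<And>w. \<bar>X w\<bar> \<le> BX" and Y: "\<And>w. \<bar>Y w\<bar> \<le> BY" and le: "\<And>w. X w \<le> Y w"
  shows "ba_integral M P X \<le> ba_integral M P Y"
  unfolding ba_integral_def
proof (rule cSUP_mono)
  show "meas_partitions M \<noteq> {}" using partition_UNIV[OF sp] by blast
  show "bdd_above ((\<lambda>\<A>. \<Sum>A\<in>\<A>. P A * (INF w\<in>A. Y w)) ` meas_partitions M)"
    using partition_sum_le[OF P sp _ Y] by (intro bdd_aboveI[of _ BY]) auto
  fix \<A> assume A: "\<A> \<in> meas_partitions M"
  have sub: "\<A> \<subseteq> sets M" and ne: "{} \<notin> \<A>" using A by (simp_all add: meas_partitions_def)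
  have "(\<Sum>A\<in>\<A>. P A * (INF w\<in>A. X w)) \<le> (\<Sum>A\<in>\<A>. P A * (INF w\<in>A. Y w))"
  proof (rule sum_mono)
    fix A assume "A \<in> \<A>"
    then have "A \<noteq> {}" "A \<in> sets M" using ne sub by auto
    have bb: "bdd_below (X ` A)" using X by (rule bdd_below_absb)
    have "(INF w\<in>A. X w) \<le> (INF w\<in>A. Y w)"
      by (rule cINF_mono[OF \<open>A \<noteq> {}\<close> bb]) (use le in blast)
    then show "P A * (INF w\<in>A. X w) \<le> P A * (INF w\<in>A. Y w)"
      using ba1D(1)[OF P \<open>A \<in> sets M\<close>] by (rule mult_left_mono)
  qed
  then show "\<exists>m\<in>meas_partitions M. (\<Sum>A\<in>\<A>. P A * (INF w\<in>A. X w)) \<le> (\<Sum>A\<in>m. P A * (INF w\<in>A. Y w))"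
    using A by blast
qed

definition bfun :: "('a \<Rightarrow> real) set" where
  "bfun = {Y. \<exists>B. \<forall>w. \<bar>Y w\<bar> \<le> B}"

lemma bfunI: "(\<And>w. \<bar>Y w\<bar> \<le> B) \<Longrightarrow> Y \<in> bfun" unfolding bfun_def by blast
lemma bfunE: "Y \<in> bfun \<Longrightarrow> (\<And>B. (\<And>w. \<bar>Y w\<bar> \<le> B) \<Longrightarrow> thesis) \<Longrightarrow> thesis" unfolding bfun_def by blast

lemma bfun_const: "(\<lambda>_. c) \<in> bfun" by (rule bfunI[of _ "\<bar>c\<bar>"]) simp

lemma bfun_add: assumes "x \<in> bfun" "y \<in> bfun" shows "(\<lambda>w. x w + y w) \<in> bfun"
proof -
  obtain B1 B2 where "\<And>w. \<bar>x w\<bar> \<le> B1" "\<And>w. \<bar>y w\<bar> \<le> B2" using assms by (metis bfunE)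
  then have "\<bar>x w + y w\<bar> \<le> B1 + B2" for w using abs_triangle_ineq[of "x w" "y w"] by smt
  then show ?thesis by (rule bfunI)
qed

lemma bfun_scale: assumes "x \<in> bfun" shows "(\<lambda>w. c * x w) \<in> bfun"
proof -
  obtain B where B: "\<And>w. \<bar>x w\<bar> \<le> B" using assms by (metis bfunE)
  have "\<bar>c * x w\<bar> \<le> \<bar>c\<bar> * B" for w using B[of w] by (simp add: abs_mult mult_left_mono)
  then show ?thesis by (rule bfunI)
qed

lemma bfun_diff: assumes "x \<in> bfun" "y \<in> bfun" shows "(\<lambda>w. x w - y w) \<in> bfun"
  using bfun_add[OF assms(1) bfun_scale[OF assms(2), of "-1"]] by simp

lemma bfun_ind: "(indicator A :: 'a \<Rightarrow> real) \<in> bfun"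
  by (rule bfunI[of _ 1]) (simp add: indicator_def)

lemma bfun_sum: assumes "finite I" "\<forall>i\<in>I. u i \<in> bfun" shows "(\<lambda>w. \<Sum>i\<in>I. u i w) \<in> bfun"
  using assms
proof (induction I rule: finite_induct)
  case empty then show ?case using bfun_const[of 0] by simp
next
  case (insert a F)
  then show ?case using bfun_add[of "u a" "\<lambda>w. \<Sum>i\<in>F. u i w"] by simp
qed

lemma Bb_bfun: assumes "X \<in> Bb M" shows "X \<in> bfun" "X \<in> borel_measurable M"
proof -
  have "bounded (range X)" "X \<in> borel_measurable M" using assms unfolding Bb_def by auto
  then obtain a where "\<forall>x\<in>range X. \<bar>x\<bar> \<le> a" unfolding bounded_real by blast
  then show "X \<in> bfun" by (intro bfunI[of _ a]) auto
  show "X \<in> borel_measurable M" by fact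
qed

context
  fixes l :: "('a \<Rightarrow> real) \<Rightarrow> real" and M :: "'a measure"
  assumes sp: "space M = UNIV"
    and ladd: "\<forall>x\<in>bfun. \<forall>y\<in>bfun. l (\<lambda>w. x w + y w) = l x + l y"
    and lsc: "\<forall>x\<in>bfun. \<forall>c. l (\<lambda>w. c * x w) = c * l x"
    and lpos: "\<forall>x\<in>bfun. (\<forall>w. x w \<le> 0) \<longrightarrow> l x \<le> 0"
    and lone: "l (\<lambda>_. 1) = 1"
begin

lemma l0: "l (\<lambda>_. 0) = 0"
  using lsc[rule_format, OF bfun_const[of 0], of 0] by simp

lemma ldiff: assumes "x \<in> bfun" "y \<in> bfun" shows "l (\<lambda>w. x w - y w) = l x - l y"
proof -
  have "l (\<lambda>w. x w + (-1) * y w) = l x + l (\<lambda>w. (-1) * y w)"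
    using ladd[rule_format, OF assms(1) bfun_scale[OF assms(2), of "-1"]] by simp
  also have "l (\<lambda>w. (-1) * y w) = - l y" using lsc[rule_format, OF assms(2), of "-1"] by simp
  finally show ?thesis by simp
qed

lemma lmono: assumes "x \<in> bfun" "y \<in> bfun" "\<And>w. x w \<le> y w" shows "l x \<le> l y"
proof -
  have "l (\<lambda>w. x w - y w) \<le> 0" using lpos bfun_diff[OF assms(1,2)] assms(3) by simp
  then show ?thesis using ldiff[OF assms(1,2)] by simp
qed

lemma lconst: "l (\<lambda>_. c) = c"
  using lsc[rule_format, OF bfun_const[of 1], of c] lone by simp

lemma lsum: assumes "finite I" "\<forall>i\<in>I. u i \<in> bfun" shows "l (\<lambda>w. \<Sum>i\<in>I. u i w) = (\<Sum>i\<in>I. l (u i))"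
  using assms
proof (induction I rule: finite_induct)
  case empty then show ?case using l0 by simp
next
  case (insert a F)
  have "l (\<lambda>w. \<Sum>i\<in>insert a F. u i w) = l (\<lambda>w. u a w + (\<Sum>i\<in>F. u i w))"
    using insert.hyps by simp
  also have "\<dots> = l (u a) + l (\<lambda>w. \<Sum>i\<in>F. u i w)"
    using ladd[rule_format, of "u a" "\<lambda>w. \<Sum>i\<in>F. u i w"] insert.prems bfun_sum[OF insert.hyps(1), of u] by simp
  finally show ?case using insert by simp
qed

definition PL :: "'a set \<Rightarrow> real" where
  "PL A = (if A \<in> sets M then l (indicator A) else 0)"

lemma PL_ba1: "PL \<in> ba1 M"
  unfolding ba1_def
proof (intro CollectI conjI ballI allI impI)
  fix A assume "A \<in> sets M"
  then show "0 \<le> PL A" unfolding PL_def using lmono[OF bfun_const[of 0] bfun_ind, of A] l0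
    by (simp add: indicator_def)
next
  show "PL (space M) = 1" unfolding PL_def using lone sp sets.top[of M] by (simp add: indicator_def)
next
  fix A B assume AB: "A \<in> sets M" "B \<in> sets M" "A \<inter> B = {}"
  have "(indicator (A \<union> B) :: 'a \<Rightarrow> real) = (\<lambda>w. indicator A w + indicator B w)"
    using AB(3) by (auto simp: indicator_def fun_eq_iff)
  then show "PL (A \<union> B) = PL A + PL B" unfolding PL_def
    using AB ladd[rule_format, OF bfun_ind bfun_ind, of A B] by (simp add: sets.Un)
next
  fix A assume "A \<notin> sets M" then show "PL A = 0" unfolding PL_def by simp
qed

lemma PL_sum: assumes "\<A> \<in> meas_partitions M"
  shows "(\<Sum>A\<in>\<A>. PL A * f A) = l (\<lambda>w. \<Sum>A\<in>\<A>. f A * indicator A w)"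
proof -
  have fin: "finite \<A>" and sub: "\<A> \<subseteq> sets M" using assms by (simp_all add: meas_partitions_def)
  have "l (\<lambda>w. \<Sum>A\<in>\<A>. f A * indicator A w) = (\<Sum>A\<in>\<A>. l (\<lambda>w. f A * indicator A w))"
  proof -
    have "\<forall>A\<in>\<A>. (\<lambda>w. f A * indicator A w) \<in> bfun" using bfun_scale[OF bfun_ind] by blast
    then show ?thesis using lsum[OF fin, of "\<lambda>A w. f A * indicator A w"] by simp
  qed
  also have "\<dots> = (\<Sum>A\<in>\<A>. PL A * f A)"
  proof (rule sum.cong)
    fix A assume "A \<in> \<A>"
    then have "A \<in> sets M" using sub by auto
    have "l (\<lambda>w. f A * indicator A w) = f A * l (indicator A)"
      using lsc[rule_format, OF bfun_ind[of A], of "f A"] by simp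
    then show "l (\<lambda>w. f A * indicator A w) = PL A * f A" unfolding PL_def using \<open>A \<in> sets M\<close> by simp
  qed simp
  finally show ?thesis by simp
qed


lemma PL_sum_le:
  assumes A: "\<A> \<in> meas_partitions M" and Y: "Y \<in> bfun"
  shows "(\<Sum>A\<in>\<A>. PL A * (INF w\<in>A. Y w)) \<le> l Y"
proof -
  have fin: "finite \<A>" and ne: "{} \<notin> \<A>" and un: "\<Union>\<A> = space M"
    and dj: "\<forall>A\<in>\<A>. \<forall>B\<in>\<A>. A \<noteq> B \<longrightarrow> A \<inter> B = {}"
    using A by (simp_all add: meas_partitions_def)
  obtain B where B: "\<And>w. \<bar>Y w\<bar> \<le> B" using Y by (metis bfunE)
  define f where "f A = (INF w\<in>A. Y w)" for A
  have pt: "(\<Sum>A\<in>\<A>. f A * indicator A w) \<le> Y w" for w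
  proof -
    have "w \<in> \<Union>\<A>" using un sp by simp
    then obtain A0 where A0: "A0 \<in> \<A>" "w \<in> A0" by blast
    have "(\<Sum>A\<in>\<A>. f A * indicator A w) = (\<Sum>A\<in>\<A>. if A = A0 then f A else 0)"
    proof (rule sum.cong)
      fix A assume "A \<in> \<A>"
      show "f A * indicator A w = (if A = A0 then f A else 0)"
      proof (cases "A = A0")
        case True then show ?thesis using A0 by simp
      next
        case False
        then have "A \<inter> A0 = {}" using dj \<open>A \<in> \<A>\<close> A0(1) by simp
        then have "w \<notin> A" using A0 by blast
        then show ?thesis using False by simp
      qed
    qed simp
    also have "\<dots> = f A0" using fin A0 by (simp add: sum.delta)
    also have "\<dots> \<le> Y w" unfolding f_def by (rule cINF_lower[OF bdd_below_absb[OF B] A0(2)])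
    finally show ?thesis .
  qed
  have "(\<Sum>A\<in>\<A>. PL A * f A) = l (\<lambda>w. \<Sum>A\<in>\<A>. f A * indicator A w)" by (rule PL_sum[OF A])
  also have "\<dots> \<le> l Y"
  proof (rule lmono[OF _ Y pt])
    have "\<forall>A\<in>\<A>. (\<lambda>w. f A * indicator A w) \<in> bfun" using bfun_scale[OF bfun_ind] by blast
    then show "(\<lambda>w. \<Sum>A\<in>\<A>. f A * indicator A w) \<in> bfun" by (rule bfun_sum[OF fin])
  qed
  finally show ?thesis unfolding f_def .
qed

lemma PL_sum_ge:
  assumes Y: "Y \<in> bfun" "Y \<in> borel_measurable M" and e: "e > 0"
  shows "\<exists>\<A>\<in>meas_partitions M. l Y - e \<le> (\<Sum>A\<in>\<A>. PL A * (INF w\<in>A. Y w))"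
proof -
  obtain B where B: "\<And>w. \<bar>Y w\<bar> \<le> B" using Y by (metis bfunE)
  define f where "f w = \<lfloor>Y w / e\<rfloor>" for w
  define K where "K = range f"
  define As where "As k = {w. f w = k}" for k
  have fl: "real_of_int (f w) \<le> Y w / e" "Y w / e < real_of_int (f w) + 1" for w
    unfolding f_def by linarith+
  have fl2: "real_of_int (f w) * e \<le> Y w" "Y w < real_of_int (f w) * e + e" for w
    using fl[of w] e by (simp_all add: field_simps)
  have Kfin: "finite K"
  proof (rule finite_subset)
    show "K \<subseteq> {\<lfloor>-B/e\<rfloor>..\<lfloor>B/e\<rfloor>}"
    proof
      fix k assume "k \<in> K"
      then obtain w where k: "k = f w" unfolding K_def by blast
      have "-B \<le> Y w" "Y w \<le> B" using B[of w] by linarith+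
      then have "-B/e \<le> Y w / e" "Y w / e \<le> B/e" using e divide_right_mono[of "-B" "Y w" e] divide_right_mono[of "Y w" B e] by auto
      then show "k \<in> {\<lfloor>-B/e\<rfloor>..\<lfloor>B/e\<rfloor>}" unfolding k f_def by (simp add: floor_mono)
    qed
  qed simp
  define \<A> where "\<A> = As ` K"
  have Ane: "As k \<noteq> {}" if "k \<in> K" for k using that unfolding K_def As_def by blast
  have Ameas: "As k \<in> sets M" for k
  proof -
    have "As k = {w \<in> space M. \<lfloor>Y w / e\<rfloor> = k}" unfolding As_def f_def sp by simp
    also have "\<dots> \<in> sets M" using Y(2) by measurable
    finally show ?thesis .
  qed
  have inj: "inj_on As K"
  proof (rule inj_onI)
    fix k k' assume "k \<in> K" "k' \<in> K" "As k = As k'"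
    then obtain w where "w \<in> As k" using Ane by blast
    then show "k = k'" using \<open>As k = As k'\<close> unfolding As_def by auto
  qed
  have part: "\<A> \<in> meas_partitions M"
    unfolding meas_partitions_def
  proof (intro CollectI conjI)
    show "finite \<A>" unfolding \<A>_def using Kfin by simp
    show "\<A> \<subseteq> sets M" unfolding \<A>_def using Ameas by blast
    show "{} \<notin> \<A>" unfolding \<A>_def using Ane by auto
    show "\<Union>\<A> = space M" unfolding \<A>_def sp K_def As_def by auto
    show "\<forall>A\<in>\<A>. \<forall>B\<in>\<A>. A \<noteq> B \<longrightarrow> A \<inter> B = {}" unfolding \<A>_def As_def by auto
  qed
  have s1: "(\<Sum>A\<in>\<A>. PL A * (INF w\<in>A. Y w)) = (\<Sum>k\<in>K. PL (As k) * (INF w\<in>As k. Y w))"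
    unfolding \<A>_def using inj by (simp add: sum.reindex)
  have s2: "(\<Sum>k\<in>K. PL (As k) * (INF w\<in>As k. Y w)) \<ge> (\<Sum>k\<in>K. PL (As k) * (real_of_int k * e))"
  proof (rule sum_mono)
    fix k assume "k \<in> K"
    have "real_of_int k * e \<le> (INF w\<in>As k. Y w)"
    proof (rule cINF_greatest)
      show "As k \<noteq> {}" using Ane[OF \<open>k\<in>K\<close>] .
      fix w assume "w \<in> As k" then show "real_of_int k * e \<le> Y w" using fl2(1)[of w] unfolding As_def by simp
    qed
    moreover have "PL (As k) \<ge> 0" using PL_ba1 Ameas by (simp add: ba1_def)
    ultimately show "PL (As k) * (real_of_int k * e) \<le> PL (As k) * (INF w\<in>As k. Y w)"
      by (simp add: mult_left_mono)
  qed
  have s3: "l Y - e \<le> (\<Sum>k\<in>K. PL (As k) * (real_of_int k * e))"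
  proof -
    have bk: "\<forall>k\<in>K. (\<lambda>w. (real_of_int k * e) * indicator (As k) w) \<in> bfun"
      using bfun_scale[OF bfun_ind] by blast
    have "(\<Sum>k\<in>K. PL (As k) * (real_of_int k * e)) = (\<Sum>k\<in>K. l (\<lambda>w. (real_of_int k * e) * indicator (As k) w))"
    proof (rule sum.cong)
      fix k assume "k \<in> K"
      show "PL (As k) * (real_of_int k * e) = l (\<lambda>w. (real_of_int k * e) * indicator (As k) w)"
        using lsc[rule_format, OF bfun_ind[of "As k"], of "real_of_int k * e"] Ameas[of k]
        unfolding PL_def by simp
    qed simp
    also have "\<dots> = l (\<lambda>w. \<Sum>k\<in>K. (real_of_int k * e) * indicator (As k) w)"
      using lsum[OF Kfin bk] by simp
    also have "(\<lambda>w. \<Sum>k\<in>K. (real_of_int k * e) * indicator (As k) w) = (\<lambda>w. real_of_int (f w) * e)"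
    proof
      fix w
      have "(\<Sum>k\<in>K. (real_of_int k * e) * indicator (As k) w) = (\<Sum>k\<in>K. if k = f w then real_of_int k * e else 0)"
        by (rule sum.cong) (auto simp: As_def indicator_def)
      also have "\<dots> = real_of_int (f w) * e" using Kfin by (simp add: sum.delta' K_def)
      finally show "(\<Sum>k\<in>K. (real_of_int k * e) * indicator (As k) w) = real_of_int (f w) * e" .
    qed
    finally have eq: "(\<Sum>k\<in>K. PL (As k) * (real_of_int k * e)) = l (\<lambda>w. real_of_int (f w) * e)" .
    have fb: "(\<lambda>w. real_of_int (f w) * e) \<in> bfun"
    proof (rule bfunI)
      fix w show "\<bar>real_of_int (f w) * e\<bar> \<le> B + e" using fl2[of w] B[of w] by (simp add: abs_le_iff)
    qed
    have "l Y \<le> l (\<lambda>w. real_of_int (f w) * e + e)"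
      by (rule lmono[OF Y(1) bfun_add[OF fb bfun_const]]) (use fl2 in \<open>simp add: less_imp_le\<close>)
    also have "\<dots> = l (\<lambda>w. real_of_int (f w) * e) + e"
      using ladd[rule_format, OF fb bfun_const[of e]] lconst[of e] by simp
    finally show ?thesis using eq by simp
  qed
  show ?thesis using part s1 s2 s3 by (intro bexI[of _ \<A>]) linarith+
qed


lemma PL_integral:
  assumes Y: "Y \<in> bfun" "Y \<in> borel_measurable M"
  shows "ba_integral M PL Y = l Y"
proof -
  let ?F = "\<lambda>\<A>. \<Sum>A\<in>\<A>. PL A * (INF w\<in>A. Y w)"
  have ne: "meas_partitions M \<noteq> {}" using partition_UNIV[OF sp] by blast
  have le: "Sup (?F ` meas_partitions M) \<le> l Y"
    by (rule cSUP_least[OF ne]) (rule PL_sum_le[OF _ Y(1)])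
  have bdd: "bdd_above (?F ` meas_partitions M)"
    by (rule bdd_aboveI[of _ "l Y"]) (use PL_sum_le[OF _ Y(1)] in blast)
  have ge: "l Y \<le> Sup (?F ` meas_partitions M)"
  proof (rule field_le_epsilon)
    fix e :: real assume "e > 0"
    then obtain \<A> where A: "\<A> \<in> meas_partitions M" "l Y - e \<le> ?F \<A>" using PL_sum_ge[OF Y] by blast
    have "?F \<A> \<le> Sup (?F ` meas_partitions M)" by (rule cSUP_upper[OF A(1) bdd])
    then show "l Y \<le> Sup (?F ` meas_partitions M) + e" using A(2) by linarith
  qed
  show ?thesis unfolding ba_integral_def using le ge by linarith
qed

end

context
  fixes C :: "('a \<Rightarrow> real) set" and H :: "('a \<Rightarrow> real) \<Rightarrow> real"
  assumes lin: "lin_sub_const C" and pp: "premium_principle C H" and Cb: "C \<subseteq> bfun"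
begin

lemma C_add: "X \<in> C \<Longrightarrow> Y \<in> C \<Longrightarrow> (\<lambda>w. X w + Y w) \<in> C" using lin unfolding lin_sub_const_def by blast
lemma C_sc: "X \<in> C \<Longrightarrow> (\<lambda>w. c * X w) \<in> C" using lin unfolding lin_sub_const_def by blast
lemma C_const: "(\<lambda>_. c) \<in> C" using lin unfolding lin_sub_const_def by blast
lemma C_cash: "X \<in> C \<Longrightarrow> (\<lambda>w. X w + c) \<in> C" using C_add[OF _ C_const] by blast
lemma H_cash: "X \<in> C \<Longrightarrow> H (\<lambda>w. X w + m) = H X + m" using pp unfolding premium_principle_def by blast
lemma H_0: "H (\<lambda>_. 0) = 0" using pp unfolding premium_principle_def by blast
lemma H_nonneg: "X \<in> C \<Longrightarrow> (\<And>w. X w \<ge> 0) \<Longrightarrow> H X \<ge> 0" using pp unfolding premium_principle_def by blast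
lemma H_const: "H (\<lambda>_. c) = c" using H_cash[OF C_const[of 0], of c] H_0 by simp

definition Kset :: "('a \<Rightarrow> real) \<Rightarrow> ('a \<Rightarrow> real) set" where
  "Kset Y = {X0\<in>C. \<forall>w. X0 w \<ge> Y w}"
definition rho :: "('a \<Rightarrow> real) \<Rightarrow> real" where
  "rho Y = Inf (H ` Kset Y)"

lemma K_ne: assumes "Y \<in> bfun" shows "Kset Y \<noteq> {}"
proof -
  obtain B where B: "\<And>w. \<bar>Y w\<bar> \<le> B" using assms by (metis bfunE)
  have "(\<lambda>_. B) \<in> Kset Y" unfolding Kset_def using C_const B by (auto simp: abs_le_iff)
  then show ?thesis by blast
qed

lemma K_bdd: assumes "Y \<in> bfun" shows "bdd_below (H ` Kset Y)"
proof -
  obtain B where B: "\<And>w. \<bar>Y w\<bar> \<le> B" using assms by (metis bfunE)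
  show ?thesis
  proof (rule bdd_belowI[of _ "-B"])
    fix x assume "x \<in> H ` Kset Y"
    then obtain X0 where X0: "X0 \<in> C" "\<And>w. X0 w \<ge> Y w" "x = H X0" unfolding Kset_def by blast
    have "(\<lambda>w. X0 w + B) \<in> C" using C_cash[OF X0(1)] .
    moreover have "X0 w + B \<ge> 0" for w using X0(2)[of w] B[of w] unfolding abs_le_iff by linarith
    ultimately have "H (\<lambda>w. X0 w + B) \<ge> 0" using H_nonneg by blast
    then show "-B \<le> x" using H_cash[OF X0(1), of B] X0(3) by simp
  qed
qed

lemma RMax_eq: assumes "Y \<in> bfun" shows "RMax C H Y = ereal (rho Y)"
proof -
  have "ereal (rho Y) = Inf (ereal ` H ` Kset Y)" unfolding rho_def
    by (rule ereal_Inf'[OF K_bdd[OF assms]]) (use K_ne[OF assms] in blast)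
  also have "\<dots> = RMax C H Y" unfolding RMax_def Kset_def by (simp add: image_comp comp_def)
  finally show ?thesis by simp
qed

lemma rho_le: assumes "Y \<in> bfun" "X0 \<in> C" "\<And>w. X0 w \<ge> Y w" shows "rho Y \<le> H X0"
proof -
  have "X0 \<in> Kset Y" using assms unfolding Kset_def by blast
  then show ?thesis unfolding rho_def by (rule cInf_lower[OF imageI K_bdd[OF assms(1)]])
qed

lemma rho_approx: assumes "Y \<in> bfun" "e > 0" shows "\<exists>X0\<in>C. (\<forall>w. X0 w \<ge> Y w) \<and> H X0 < rho Y + e"
proof -
  have "Inf (H ` Kset Y) < rho Y + e" unfolding rho_def using assms(2) by simp
  then obtain x where "x \<in> H ` Kset Y" "x < rho Y + e"
    using cInf_less_iff[of "H ` Kset Y", OF _ K_bdd[OF assms(1)]] K_ne[OF assms(1)] by blast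
  then show ?thesis unfolding Kset_def by blast
qed

lemma rho_ge: assumes "Y \<in> bfun" "\<And>X0. X0 \<in> C \<Longrightarrow> (\<forall>w. X0 w \<ge> Y w) \<Longrightarrow> c \<le> H X0" shows "c \<le> rho Y"
  unfolding rho_def by (rule cInf_greatest) (use K_ne[OF assms(1)] assms(2) in \<open>auto simp: Kset_def\<close>)

lemma rho_le_H: "X \<in> C \<Longrightarrow> rho X \<le> H X"
  using rho_le[of X X] Cb by auto

lemma rho_mono: assumes "Y \<in> bfun" "Z \<in> bfun" "\<And>w. Y w \<le> Z w" shows "rho Y \<le> rho Z"
proof (rule rho_ge[OF assms(2)])
  fix X0 assume "X0 \<in> C" "\<forall>w. X0 w \<ge> Z w"
  then show "rho Y \<le> H X0" using rho_le[OF assms(1)] assms(3) by (meson order_trans)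
qed

lemma rho_cash_le: assumes "Y \<in> bfun" shows "rho (\<lambda>w. Y w + c) \<le> rho Y + c"
proof (rule field_le_epsilon)
  fix e :: real assume "e > 0"
  then obtain X0 where X0: "X0 \<in> C" "\<forall>w. X0 w \<ge> Y w" "H X0 < rho Y + e" using rho_approx[OF assms] by blast
  have "rho (\<lambda>w. Y w + c) \<le> H (\<lambda>w. X0 w + c)"
    by (rule rho_le[OF bfun_add[OF assms bfun_const] C_cash[OF X0(1)]]) (use X0(2) in simp)
  also have "\<dots> = H X0 + c" by (rule H_cash[OF X0(1)])
  finally show "rho (\<lambda>w. Y w + c) \<le> rho Y + c + e" using X0(3) by linarith
qed

lemma rho_convex:
  assumes cv: "convex_on_fun C H" and Y: "Y \<in> bfun" and Z: "Z \<in> bfun" and a: "0 \<le> a" "a \<le> 1"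
  shows "rho (\<lambda>w. a * Y w + (1-a) * Z w) \<le> a * rho Y + (1-a) * rho Z"
proof (rule field_le_epsilon)
  fix e :: real assume "e > 0"
  obtain X1 where X1: "X1 \<in> C" "\<forall>w. X1 w \<ge> Y w" "H X1 < rho Y + e" using rho_approx[OF Y \<open>e>0\<close>] by blast
  obtain X2 where X2: "X2 \<in> C" "\<forall>w. X2 w \<ge> Z w" "H X2 < rho Z + e" using rho_approx[OF Z \<open>e>0\<close>] by blast
  have XC: "(\<lambda>w. a * X1 w + (1-a) * X2 w) \<in> C" using C_add[OF C_sc[OF X1(1)] C_sc[OF X2(1)]] .
  have bf: "(\<lambda>w. a * Y w + (1-a) * Z w) \<in> bfun" using bfun_add[OF bfun_scale[OF Y] bfun_scale[OF Z]] .
  have ge: "a * X1 w + (1-a) * X2 w \<ge> a * Y w + (1-a) * Z w" for w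
    using X1(2) X2(2) a by (intro add_mono mult_left_mono) auto
  have "rho (\<lambda>w. a * Y w + (1-a) * Z w) \<le> H (\<lambda>w. a * X1 w + (1-a) * X2 w)"
    by (rule rho_le[OF bf XC]) (use ge in simp)
  also have "\<dots> \<le> a * H X1 + (1-a) * H X2" using cv X1(1) X2(1) a unfolding convex_on_fun_def by blast
  also have "\<dots> \<le> a * (rho Y + e) + (1-a) * (rho Z + e)"
    using X1(3) X2(3) a by (intro add_mono mult_left_mono) auto
  also have "\<dots> = a * rho Y + (1-a) * rho Z + e" by (simp add: algebra_simps)
  finally show "rho (\<lambda>w. a * Y w + (1-a) * Z w) \<le> a * rho Y + (1-a) * rho Z + e" .
qed

end

theorem corollary3p4:
  fixes M :: "'a measure" and C :: "('a \<Rightarrow> real) set" and H :: "('a \<Rightarrow> real) \<Rightarrow> real"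
  assumes "space M = UNIV"
    and "C \<subseteq> Bb M"
    and "lin_sub_const C"
    and "premium_principle C H"
    and "convex_on_fun C H"
    and "X \<in> C"
  shows "(\<exists>P\<in>Pset M C H. DMin C H X = ereal (DP M H P X) + Hstar M C H P) \<and>
         (\<forall>P\<in>Pset M C H. DMin C H X \<le> ereal (DP M H P X) + Hstar M C H P)"
proof -
  note sp = assms(1) and CB = assms(2) and lin = assms(3) and pp = assms(4) and cv = assms(5) and X = assms(6)
  have Cb: "C \<subseteq> bfun" using CB Bb_bfun(1) by blast
  have Cm: "Y \<in> borel_measurable M" if "Y \<in> C" for Y using CB Bb_bfun(2) that by blast
  have Xb: "X \<in> bfun" using Cb X by blast
  let ?r = "rho C H"
  have dmin: "DMin C H X = ereal (H X - ?r X)"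
    unfolding DMin_def using RMax_eq[OF lin pp Cb Xb] by simp
  have dp: "DP M H P X = H X - ba_integral M P X" for P
    unfolding DP_def using H_cash[OF lin pp Cb X, where m="- ba_integral M P X"] by simp
  have allP: "DMin C H X \<le> ereal (DP M H P X) + Hstar M C H P" if P: "P \<in> Pset M C H" for P
  proof -
    have Pb: "P \<in> ba1 M" and Hlt: "Hstar M C H P < \<infinity>" using P unfolding Pset_def by auto
    have hge: "ereal (ba_integral M P Y - H Y) \<le> Hstar M C H P" if "Y \<in> C" for Y
      unfolding Hstar_def by (rule SUP_upper[OF that])
    obtain hs where hs: "Hstar M C H P = ereal hs"
      using Hlt hge[OF X] by (cases "Hstar M C H P") auto
    have "ba_integral M P X - hs \<le> ?r X"
    proof (rule rho_ge[OF lin pp Cb Xb])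
      fix X0 assume X0: "X0 \<in> C" "\<forall>w. X0 w \<ge> X w"
      obtain B1 where B1: "\<And>w. \<bar>X w\<bar> \<le> B1" using Xb by (metis bfunE)
      obtain B2 where B2: "\<And>w. \<bar>X0 w\<bar> \<le> B2" using Cb X0(1) by (metis bfunE subsetD)
      have "ba_integral M P X \<le> ba_integral M P X0"
        by (rule ba_integral_mono[OF Pb sp B1 B2]) (use X0(2) in blast)
      moreover have "ba_integral M P X0 - H X0 \<le> hs" using hge[OF X0(1)] hs by simp
      ultimately show "ba_integral M P X - hs \<le> H X0" by linarith
    qed
    then show ?thesis unfolding dmin dp hs by simp
  qed
  define g where "g Y = ?r (\<lambda>w. X w + Y w) - ?r X" for Y
  have cvx: "\<forall>u\<in>bfun. \<forall>v\<in>bfun. \<forall>a::real. 0 \<le> a \<and> a \<le> 1 \<longrightarrow> g (\<lambda>z. a * u z + (1-a) * v z) \<le> a * g u + (1-a) * g v"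
  proof (intro ballI allI impI)
    fix u v :: "'a \<Rightarrow> real" and a :: real assume uv: "u \<in> bfun" "v \<in> bfun" and a: "0 \<le> a \<and> a \<le> 1"
    have eq: "(\<lambda>w. X w + (a * u w + (1-a) * v w)) = (\<lambda>w. a * (X w + u w) + (1-a) * (X w + v w))"
      by (simp add: fun_eq_iff algebra_simps)
    have "?r (\<lambda>w. a * (X w + u w) + (1-a) * (X w + v w)) \<le> a * ?r (\<lambda>w. X w + u w) + (1-a) * ?r (\<lambda>w. X w + v w)"
      using rho_convex[OF lin pp Cb cv bfun_add[OF Xb uv(1)] bfun_add[OF Xb uv(2)], of a] a by simp
    then show "g (\<lambda>z. a * u z + (1-a) * v z) \<le> a * g u + (1-a) * g v"
      unfolding g_def eq by (simp add: algebra_simps)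
  qed
  have g0: "g (\<lambda>_. 0) \<ge> 0" unfolding g_def by simp
  have Vadd: "\<forall>x\<in>bfun. \<forall>y\<in>bfun. (\<lambda>w. x w + y w) \<in> bfun" using bfun_add by blast
  have Vsc: "\<forall>x\<in>bfun. \<forall>c. (\<lambda>w. c * x w) \<in> bfun" using bfun_scale by blast
  obtain l where ladd: "\<forall>x\<in>bfun. \<forall>y\<in>bfun. l (\<lambda>w. x w + y w) = l x + l y"
    and lsc: "\<forall>x\<in>bfun. \<forall>c. l (\<lambda>w. c * x w) = c * l x" and lg: "\<forall>x\<in>bfun. l x \<le> g x"
    using hahn_banach_convex[OF bfun_const Vadd Vsc cvx g0] by blast
  have lpos: "\<forall>x\<in>bfun. (\<forall>w. x w \<le> 0) \<longrightarrow> l x \<le> 0"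
  proof (intro ballI impI)
    fix x :: "'a \<Rightarrow> real" assume x: "x \<in> bfun" "\<forall>w. x w \<le> 0"
    have "?r (\<lambda>w. X w + x w) \<le> ?r X" by (rule rho_mono[OF lin pp Cb bfun_add[OF Xb x(1)] Xb]) (use x(2) in simp)
    then show "l x \<le> 0" using lg x(1) unfolding g_def by fastforce
  qed
  have lone: "l (\<lambda>_. 1) = 1"
  proof -
    have "l (\<lambda>_. 1) \<le> g (\<lambda>_. 1)" using lg bfun_const by blast
    also have "\<dots> \<le> 1" unfolding g_def using rho_cash_le[OF lin pp Cb Xb, of 1] by simp
    finally have u: "l (\<lambda>_. 1) \<le> 1" .
    have "l (\<lambda>_. -1) \<le> g (\<lambda>_. -1)" using lg bfun_const by blast
    also have "\<dots> \<le> -1" unfolding g_def using rho_cash_le[OF lin pp Cb Xb, of "-1"] by simp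
    finally have "l (\<lambda>_. -1) \<le> -1" .
    moreover have "l (\<lambda>w. (-1) * (\<lambda>_. 1::real) w) = (-1) * l (\<lambda>_. 1)"
      using lsc[rule_format, OF bfun_const[of 1], of "-1"] by simp
    ultimately have "l (\<lambda>_. 1) \<ge> 1" by simp
    with u show ?thesis by simp
  qed
  define P where "P = PL l M"
  have Pb: "P \<in> ba1 M" unfolding P_def by (rule PL_ba1[OF sp ladd lsc lpos lone])
  have Pint: "ba_integral M P Y = l Y" if "Y \<in> C" for Y
    unfolding P_def using PL_integral[OF sp ladd lsc lpos lone] that Cb Cm by blast
  have Hle: "Hstar M C H P \<le> ereal (l X - ?r X)"
    unfolding Hstar_def
  proof (rule SUP_least)
    fix Y assume Y: "Y \<in> C"
    have Yb: "Y \<in> bfun" using Cb Y by blast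
    have "l (\<lambda>w. Y w - X w) \<le> g (\<lambda>w. Y w - X w)" using lg bfun_diff[OF Yb Xb] by blast
    also have "\<dots> = ?r Y - ?r X" unfolding g_def by simp
    finally have "l Y - l X \<le> ?r Y - ?r X" using ldiff[OF sp ladd lsc lpos lone Yb Xb] by simp
    moreover have "?r Y \<le> H Y" by (rule rho_le_H[OF lin pp Cb Y])
    ultimately show "ereal (ba_integral M P Y - H Y) \<le> ereal (l X - ?r X)" using Pint[OF Y] by simp
  qed
  have PP: "P \<in> Pset M C H" unfolding Pset_def using Pb Hle by (auto intro: le_less_trans)
  have "ereal (DP M H P X) + Hstar M C H P \<le> ereal (DP M H P X) + ereal (l X - ?r X)"
    using Hle by (rule add_left_mono)
  also have "\<dots> = DMin C H X" unfolding dmin dp Pint[OF X] by simp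
  finally have "DMin C H X = ereal (DP M H P X) + Hstar M C H P" using allP[OF PP] by simp
  then show ?thesis using PP allP by blast
qed

end
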